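(* Let $\lambda>0$, $L>0$, $1\le m\le d$, and let $\boldsymbol{x}_1,\ldots,\boldsymbol{x}_t\in\mathbb{R}^d$ satisfy $\|\boldsymbol{x}_s\|\le L$. With $\boldsymbol{V}_t=\boldsymbol{X}_t^\top\boldsymbol{X}_t+\lambda\boldsymbol{I}$ and $\bar\rho_t$ from the FD sketch of size $m$ of $\boldsymbol{x}_1,\ldots,\boldsymbol{x}_t$, $$\ln\frac{\det(\boldsymbol{V}_t)}{\det(\lambda\boldsymbol{I})}\le d\ln\Big(1+\frac{\bar\rho_t}{\lambda}\Big)+m\ln\Big(1+\frac{tL^2}{m\lambda}\Big).$$
   Context: $\boldsymbol{X}_t$ is the $t\times d$ matrix with rows $\boldsymbol{x}_1^\top,\ldots,\boldsymbol{x}_t^\top$. Frequent Directions (FD) sketch of size $m$ ($1\le m\le d$) of a sequence $\boldsymbol{x}_1,\boldsymbol{x}_2,\ldots\in\mathbb{R}^d$: set $\boldsymbol{S}_0=\boldsymbol{0}\in\mathbb{R}^{m\times d}$. For $s\ge1$ let $\boldsymbol{A}_s=\boldsymbol{S}_{s-1}^\top\boldsymbol{S}_{s-1}+\boldsymbol{x}_s\boldsymbol{x}_s^\top$, let $\sigma_1\ge\cdots\ge\sigma_d\ge0$ be its eigenvalues with orthonormal eigenvectors $\boldsymbol{u}_1,\ldots,\boldsymbol{u}_d$, set $\rho_s=\sigma_m$, and let $\boldsymbol{S}_s\in\mathbb{R}^{m\times d}$ have $i$-th row $\sqrt{\sigma_i-\rho_s}\,\boldsymbol{u}_i^\top$ ($i=1,\ldots,m$).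 Define $\bar\rho_t=\rho_1+\cdots+\rho_t$ ($\bar\rho_0=0$). *)

theory Defs
  imports "HOL-Analysis.Analysis"
begin

definition outer :: "real^'d \<Rightarrow> real^'d \<Rightarrow> real^'d^'d" where
  "outer x y = (\<chi> i j. x $ i * y $ j)"

text \<open>A sketch matrix S (m x d) is represented by its rows S 1, ..., S m.
  Its Gram matrix S^T S is the sum of the outer products of its rows.\<close>
definition gram :: "nat \<Rightarrow> (nat \<Rightarrow> real^'d) \<Rightarrow> real^'d^'d" where
  "gram m S = (\<Sum>i\<in>{1..m}. outer (S i) (S i))"

definition fd_step :: "nat \<Rightarrow> (nat \<Rightarrow> real^'d) \<Rightarrow> real^'d \<Rightarrow> (nat \<Rightarrow> real^'d) \<Rightarrow> real \<Rightarrow> bool" where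
  "fd_step m Sp x S rho \<longleftrightarrow>
     (\<exists>(\<sigma>::nat \<Rightarrow> real) (u::nat \<Rightarrow> real^'d).
        (\<forall>i\<in>{1..CARD('d)}. \<forall>j\<in>{1..CARD('d)}. u i \<bullet> u j = (if i = j then 1 else 0)) \<and>
        (\<forall>i\<in>{1..CARD('d)}. (gram m Sp + outer x x) *v u i = \<sigma> i *\<^sub>R u i) \<and>
        (\<forall>i\<in>{1..CARD('d)}. \<forall>j\<in>{1..CARD('d)}. i \<le> j \<longrightarrow> \<sigma> j \<le> \<sigma> i) \<and>
        rho = \<sigma> m \<and>
        (\<forall>i\<in>{1..m}. S i = sqrt (\<sigma> i - rho) *\<^sub>R u i))"

definition fd_sketch :: "nat \<Rightarrow> (nat \<Rightarrow> real^'d) \<Rightarrow> nat \<Rightarrow> (nat \<Rightarrow> nat \<Rightarrow> real^'d) \<Rightarrow> (nat \<Rightarrow> real) \<Rightarrow> bool" where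
  "fd_sketch m x t S rho \<longleftrightarrow>
     (\<forall>i. S 0 i = 0) \<and>
     (\<forall>s\<in>{1..t}. fd_step m (S (s - 1)) (x s) (S s) (rho s))"

end

theory Submission
  imports Defs
begin

lemma outer_mulv: "outer a b *v z = (b \<bullet> z) *\<^sub>R a"
  by (simp add: outer_def matrix_vector_mult_def vec_eq_iff inner_vec_def sum_distrib_left mult_ac)

lemma mat_mul_outer: "P ** outer a b = outer (P *v a) b"
  by (simp add: outer_def matrix_matrix_mult_def matrix_vector_mult_def vec_eq_iff sum_distrib_left mult_ac)

lemma mat_mul_scaleR: "P ** (c *\<^sub>R X) = c *\<^sub>R (P ** (X::real^'n^'m))"
  by (simp add: matrix_matrix_mult_def vec_eq_iff sum_distrib_left mult_ac)

lemma outer_zero[simp]: "outer 0 b = 0"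
  by (simp add: outer_def vec_eq_iff)

lemma outer_scaleR_left: "outer (c *\<^sub>R a) b = c *\<^sub>R outer a b"
  by (simp add: outer_def vec_eq_iff)

lemma det_row_form:
  fixes N :: "real^'n^'n"
  shows "det (N + r *\<^sub>R outer (axis k 1) b) = det N + r * det (\<chi> i. if i = k then b else row i N)"
proof -
  have eq: "N + r *\<^sub>R outer (axis k 1) b = (\<chi> i. if i = k then row i N + r *s b else row i N)"
    by (simp add: outer_def vec_eq_iff axis_def row_def)
  have eq2: "(\<chi> i. if i = k then row i N else row i N) = N"
    by (simp add: vec_eq_iff row_def)
  show ?thesis
    unfolding eq det_row_add[of k "\<lambda>i. row i N" "\<lambda>i. r *s b" "\<lambda>i. row i N"] eq2
      det_row_mul[of k r "\<lambda>i. b" "\<lambda>i. row i N"] by simp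
qed

lemma det_affine:
  fixes M :: "real^'n^'n"
  shows "\<exists>D. \<forall>s. det (M + s *\<^sub>R outer a b) = det M + s * D"
proof (cases "a = 0")
  case True then show ?thesis by auto
next
  case False
  define a' where "a' = a /\<^sub>R norm a"
  have "norm a' = 1" using False by (simp add: a'_def)
  then obtain Q where Q: "orthogonal_matrix Q" "Q *v (axis k 1) = a'"
    using orthogonal_matrix_exists_basis by blast
  define P where "P = transpose Q"
  have PQ: "P ** Q = mat 1" using Q(1) by (simp add: P_def orthogonal_matrix)
  have Pa': "P *v a' = axis k 1"
    by (metis PQ Q(2) matrix_vector_mul_assoc matrix_vector_mul_lid)
  have Pa: "P *v a = norm a *\<^sub>R axis k 1"
  proof -
    have "a = norm a *\<^sub>R a'" using False by (simp add: a'_def)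
    then have "P *v a = norm a *\<^sub>R (P *v a')"
      by (metis matrix_vector_mult_scaleR)
    then show ?thesis using Pa' by simp
  qed
  have dP: "det P \<noteq> 0"
    using det_orthogonal_matrix[of P] Q(1) by (auto simp: P_def)
  define N where "N = P ** M"
  define D where "D = norm a * det (\<chi> i. if i = k then b else row i N) / det P"
  have "det (M + s *\<^sub>R outer a b) = det M + s * D" for s
  proof -
    have "P ** (M + s *\<^sub>R outer a b) = N + (s * norm a) *\<^sub>R outer (axis k 1) b"
      unfolding matrix_add_ldistrib mat_mul_scaleR mat_mul_outer Pa outer_scaleR_left N_def by simp
    then have h2: "det (P ** (M + s *\<^sub>R outer a b)) = det N + (s * norm a) * det (\<chi> i. if i = k then b else row i N)"
      by (simp only: det_row_form)
    have h1: "det (P ** (M + s *\<^sub>R outer a b)) = det P * det (M + s *\<^sub>R outer a b)" by (rule det_mul)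
    have h3: "det N = det P * det M" unfolding N_def by (rule det_mul)
    have aux: "\<And>p x m s c. (p::real) \<noteq> 0 \<Longrightarrow> p*x = p*m + s*c \<Longrightarrow> x = m + s*(c/p)"
      by (simp add: field_simps)
    show ?thesis unfolding D_def using aux[OF dP, of "det (M + s *\<^sub>R outer a b)" "det M" s "norm a * det (\<chi> i. if i = k then b else row i N)"] h1 h2 h3
      by (simp add: mult.assoc)
  qed
  then show ?thesis by blast
qed

lemma det_zero_ker:
  fixes A :: "real^'n^'n"
  assumes "det A = 0" shows "\<exists>z. z \<noteq> 0 \<and> A *v z = 0"
  using assms det_eq_0_rank less_rank_noninjective vec.inj_iff_eq_0 by blast

definition pd :: "real^'n^'n \<Rightarrow> bool" where
  "pd M \<longleftrightarrow> (\<forall>z. z \<noteq> 0 \<longrightarrow> 0 < z \<bullet> (M *v z))"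

lemma quad_outer: "z \<bullet> (outer a a *v z) = (a \<bullet> z)^2"
  by (simp add: outer_mulv power2_eq_square inner_commute)

lemma mulv_scaleR_mat: "(c *\<^sub>R A) *v z = c *\<^sub>R (A *v (z::real^'n))"
  by (simp add: matrix_vector_mult_def vec_eq_iff sum_distrib_left mult_ac)

lemma quad_add_outer: "z \<bullet> ((M + c *\<^sub>R outer a a) *v z) = z \<bullet> (M *v z) + c * (a \<bullet> z)^2"
  by (simp add: matrix_vector_mult_add_rdistrib mulv_scaleR_mat inner_add_right quad_outer)

lemma pd_add: "pd M \<Longrightarrow> 0 \<le> c \<Longrightarrow> pd (M + c *\<^sub>R outer a a)"
  unfolding pd_def quad_add_outer
  by (metis add_pos_nonneg mult_nonneg_nonneg zero_le_power2)

lemma pd_det_nz: "pd M \<Longrightarrow> det M \<noteq> 0"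
  unfolding pd_def using det_zero_ker by fastforce

lemma rank1_mono:
  assumes "pd M" "0 < det M" "0 \<le> c"
  shows "det M \<le> det (M + c *\<^sub>R outer a a)"
proof -
  obtain D where D: "\<And>s. det (M + s *\<^sub>R outer a a) = det M + s * D"
    using det_affine by blast
  have "0 \<le> D"
  proof (rule ccontr)
    assume "\<not> 0 \<le> D"
    define s0 where "s0 = - det M / D"
    have "0 \<le> s0" using assms(2) \<open>\<not> 0 \<le> D\<close> by (simp add: s0_def divide_nonneg_neg)
    moreover have "det (M + s0 *\<^sub>R outer a a) = 0"
      using D[of s0] \<open>\<not> 0 \<le> D\<close> by (simp add: s0_def)
    ultimately show False using pd_add[OF assms(1)] pd_det_nz by blast
  qed
  then show ?thesis using D[of c] assms(3) by simp
qed

lemma det_sum_mono: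
  assumes "finite K" "pd M" "0 < det M" "\<forall>k\<in>K. 0 \<le> c k"
  shows "pd (M + (\<Sum>k\<in>K. c k *\<^sub>R outer (a k) (a k))) \<and> det M \<le> det (M + (\<Sum>k\<in>K. c k *\<^sub>R outer (a k) (a k)))"
  using assms(1,4)
proof (induction K rule: finite_induct)
  case empty
  then show ?case using assms by simp
next
  case (insert k K)
  let ?N = "M + (\<Sum>k\<in>K. c k *\<^sub>R outer (a k) (a k))"
  have IH: "pd ?N" "det M \<le> det ?N" using insert by auto
  have eq: "M + (\<Sum>k\<in>insert k K. c k *\<^sub>R outer (a k) (a k)) = ?N + c k *\<^sub>R outer (a k) (a k)"
    using insert(1,2) by (simp add: algebra_simps)
  have "det ?N \<le> det (?N + c k *\<^sub>R outer (a k) (a k))"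
    using rank1_mono[OF IH(1)] IH(2) assms(3) insert(4) by force
  then show ?case unfolding eq using pd_add[OF IH(1)] insert(4) IH(2) by auto
qed

lemma sum_mulv: "(\<Sum>i\<in>I. A i) *v (z::real^'n) = (\<Sum>i\<in>I. A i *v z)"
  by (induction I rule: infinite_finite_induct) (simp_all add: matrix_vector_mult_add_rdistrib)

lemma mulv_sum: "(A::real^'n^'m) *v (\<Sum>i\<in>I. f i) = (\<Sum>i\<in>I. A *v f i)"
  by (induction I rule: infinite_finite_induct) (simp_all add: matrix_vector_right_distrib)

lemma ortho_complete:
  fixes u :: "nat \<Rightarrow> real^'d"
  assumes on: "\<forall>i\<in>{1..CARD('d)}. \<forall>j\<in>{1..CARD('d)}. u i \<bullet> u j = (if i = j then 1 else 0)"
  shows "z = (\<Sum>i\<in>{1..CARD('d)}. (u i \<bullet> z) *\<^sub>R u i)"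
proof (rule ccontr)
  let ?I = "{1..CARD('d)}"
  define w where "w = z - (\<Sum>i\<in>?I. (u i \<bullet> z) *\<^sub>R u i)"
  assume "z \<noteq> (\<Sum>i\<in>?I. (u i \<bullet> z) *\<^sub>R u i)"
  then have w0: "w \<noteq> 0" by (simp add: w_def)
  have wu: "u j \<bullet> w = 0" if "j \<in> ?I" for j
  proof -
    have "u j \<bullet> (\<Sum>i\<in>?I. (u i \<bullet> z) *\<^sub>R u i) = (\<Sum>i\<in>?I. (u i \<bullet> z) * (if j = i then 1 else 0))"
      using on that by (simp add: inner_sum_right)
    also have "\<dots> = u j \<bullet> z" using that by (simp add: if_distrib cong: if_cong)
    finally show ?thesis by (simp add: w_def inner_diff_right)
  qed
  have inj: "inj_on u ?I"
  proof (rule inj_onI)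
    fix i j assume "i \<in> ?I" "j \<in> ?I" "u i = u j"
    then have "u i \<bullet> u j = 1" using on by auto
    then show "i = j" using on \<open>i \<in> ?I\<close> \<open>j \<in> ?I\<close> by (auto split: if_splits)
  qed
  have wn: "w \<notin> u ` ?I"
  proof
    assume "w \<in> u ` ?I"
    then obtain j where "j \<in> ?I" "w = u j" by auto
    then show False using on wu[of j] by auto
  qed
  define B where "B = insert w (u ` ?I)"
  have "pairwise orthogonal B"
  proof -
    have "pairwise orthogonal (u ` ?I)"
    proof (rule pairwiseI)
      fix a b assume ab: "a \<in> u ` ?I" "b \<in> u ` ?I" "a \<noteq> b"
      then obtain i j where "i \<in> ?I" "j \<in> ?I" "a = u i" "b = u j" by blast
      moreover then have "i \<noteq> j" using ab by blast
      ultimately show "orthogonal a b" using on unfolding orthogonal_def by simp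
    qed
    moreover have "orthogonal w y \<and> orthogonal y w" if "y \<in> u ` ?I" for y
      using that wu unfolding orthogonal_def by (auto simp: inner_commute)
    ultimately show ?thesis unfolding B_def pairwise_insert by blast
  qed
  moreover have "0 \<notin> B"
    unfolding B_def using w0 on by force
  ultimately have "independent B" by (rule pairwise_orthogonal_independent)
  then have "card B \<le> CARD('d)" using independent_bound by fastforce
  moreover have "card B = CARD('d) + 1"
    unfolding B_def using wn inj by (simp add: card_image)
  ultimately show False by simp
qed

lemma mat1_expansion:
  fixes u :: "nat \<Rightarrow> real^'d"
  assumes on: "\<forall>i\<in>{1..CARD('d)}. \<forall>j\<in>{1..CARD('d)}. u i \<bullet> u j = (if i = j then 1 else 0)"
  shows "mat 1 = (\<Sum>i\<in>{1..CARD('d)}. outer (u i) (u i))"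
  unfolding matrix_eq
  using ortho_complete[OF on] by (simp add: sum_mulv outer_mulv)

lemma spectral_expansion:
  fixes u :: "nat \<Rightarrow> real^'d"
  assumes on: "\<forall>i\<in>{1..CARD('d)}. \<forall>j\<in>{1..CARD('d)}. u i \<bullet> u j = (if i = j then 1 else 0)"
    and ev: "\<forall>i\<in>{1..CARD('d)}. A *v u i = \<sigma> i *\<^sub>R u i"
  shows "A = (\<Sum>i\<in>{1..CARD('d)}. \<sigma> i *\<^sub>R outer (u i) (u i))"
  unfolding matrix_eq
proof
  fix z
  have "A *v z = A *v (\<Sum>i\<in>{1..CARD('d)}. (u i \<bullet> z) *\<^sub>R u i)"
    using ortho_complete[OF on, of z] by simp
  also have "\<dots> = (\<Sum>i\<in>{1..CARD('d)}. (u i \<bullet> z) *\<^sub>R (\<sigma> i *\<^sub>R u i))"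
    unfolding mulv_sum using ev by (simp add: matrix_vector_mult_scaleR)
  also have "\<dots> = (\<Sum>i\<in>{1..CARD('d)}. \<sigma> i *\<^sub>R outer (u i) (u i)) *v z"
    by (simp add: sum_mulv mulv_scaleR_mat outer_mulv mult.commute)
  finally show "A *v z = (\<Sum>i\<in>{1..CARD('d)}. \<sigma> i *\<^sub>R outer (u i) (u i)) *v z" .
qed

lemma det_expansion:
  fixes u :: "nat \<Rightarrow> real^'d"
  assumes on: "\<forall>i\<in>{1..CARD('d)}. \<forall>j\<in>{1..CARD('d)}. u i \<bullet> u j = (if i = j then 1 else 0)"
  shows "det (\<Sum>i\<in>{1..CARD('d)}. w i *\<^sub>R outer (u i) (u i)) = (\<Prod>i\<in>{1..CARD('d)}. w i)"
proof -
  let ?I = "{1..CARD('d)}"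
  obtain h where h: "bij_betw h ?I (UNIV::'d set)"
    using ex_bij_betw_nat_finite_1[of "UNIV::'d set"] by auto
  define g where "g = inv_into ?I h"
  have g: "bij_betw g (UNIV::'d set) ?I" unfolding g_def by (rule bij_betw_inv_into[OF h])
  define v where "v j = u (g j)" for j
  define c where "c j = w (g j)" for j
  have gI: "g j \<in> ?I" for j using g by (auto simp: bij_betw_def)
  have ginj: "g j = g k \<Longrightarrow> j = k" for j k using g by (auto simp: bij_betw_def inj_on_def)
  have von: "v j \<bullet> v k = (if j = k then 1 else 0)" for j k
    using on gI[of j] gI[of k] ginj[of j k] by (auto simp: v_def)
  have S: "(\<Sum>i\<in>?I. w i *\<^sub>R outer (u i) (u i)) = (\<Sum>j\<in>UNIV. c j *\<^sub>R outer (v j) (v j))"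
    unfolding c_def v_def using sum.reindex_bij_betw[OF g, of "\<lambda>i. w i *\<^sub>R outer (u i) (u i)"] by simp
  have P: "(\<Prod>i\<in>?I. w i) = (\<Prod>j\<in>UNIV. c j)"
    unfolding c_def using prod.reindex_bij_betw[OF g, of w] by simp
  define Q :: "real^'d^'d" where "Q = (\<chi> a j. v j $ a)"
  define D :: "real^'d^'d" where "D = (\<chi> a b. if a = b then c a else 0)"
  have M: "(\<Sum>j\<in>UNIV. c j *\<^sub>R outer (v j) (v j)) = Q ** D ** transpose Q"
    by (simp add: vec_eq_iff sum_component outer_def Q_def D_def matrix_matrix_mult_def transpose_def
        if_distrib sum.delta cong: if_cong) (simp add: mult_ac)
  have QQ: "transpose Q ** Q = mat 1"
    using von by (simp add: vec_eq_iff Q_def matrix_matrix_mult_def transpose_def mat_def inner_vec_def)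
  have dQ: "det Q * det Q = 1"
    using det_mul[of "transpose Q" Q] QQ by simp
  have dD: "det D = (\<Prod>j\<in>UNIV. c j)"
    by (subst det_diagonal) (auto simp: D_def)
  show ?thesis unfolding S P M det_mul dD det_transpose using dQ by (simp add: mult_ac)
qed

lemma outer_scaleR_both: "outer (c *\<^sub>R a) (c *\<^sub>R a) = (c * c) *\<^sub>R outer a a"
  by (simp add: outer_def vec_eq_iff mult_ac)

lemma gram_quad: "z \<bullet> (gram m S *v z) = (\<Sum>k\<in>{1..m}. (S k \<bullet> z)^2)"
  unfolding gram_def sum_mulv inner_sum_right quad_outer ..

lemma gram_quad_nonneg: "0 \<le> z \<bullet> (gram m S *v z)"
  unfolding gram_quad by (simp add: sum_nonneg)

lemma trace_sum: "trace (\<Sum>i\<in>I. A i) = (\<Sum>i\<in>I. trace (A i :: real^'n^'n))"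
  by (induction I rule: infinite_finite_induct) (simp_all add: trace_add trace_0[unfolded mat_0])

lemma trace_scaleR: "trace (c *\<^sub>R (A::real^'n^'n)) = c * trace A"
  by (simp add: trace_def sum_distrib_left)

lemma trace_outer: "trace (outer a a) = a \<bullet> a"
  by (simp add: trace_def outer_def inner_vec_def)

lemma step_facts:
  fixes Sp Sn :: "nat \<Rightarrow> real^'d" and x :: "real^'d" and \<sigma> :: "nat \<Rightarrow> real" and u :: "nat \<Rightarrow> real^'d"
  assumes m: "1 \<le> m" "m \<le> CARD('d)"
    and on: "\<forall>i\<in>{1..CARD('d)}. \<forall>j\<in>{1..CARD('d)}. u i \<bullet> u j = (if i = j then 1 else 0)"
    and ev: "\<forall>i\<in>{1..CARD('d)}. (gram m Sp + outer x x) *v u i = \<sigma> i *\<^sub>R u i"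
    and srt: "\<forall>i\<in>{1..CARD('d)}. \<forall>j\<in>{1..CARD('d)}. i \<le> j \<longrightarrow> \<sigma> j \<le> \<sigma> i"
    and rho: "rho = \<sigma> m"
    and rows: "\<forall>i\<in>{1..m}. Sn i = sqrt (\<sigma> i - rho) *\<^sub>R u i"
  shows "0 \<le> rho"
    and "\<forall>i\<in>{1..m}. 0 \<le> \<sigma> i - rho"
    and "\<forall>i\<in>{m<..CARD('d)}. 0 \<le> rho - \<sigma> i"
    and "gram m Sn = (\<Sum>i\<in>{1..m}. (\<sigma> i - rho) *\<^sub>R outer (u i) (u i))"
    and "gram m Sp + outer x x - gram m Sn = rho *\<^sub>R mat 1 - (\<Sum>i\<in>{m<..CARD('d)}. (rho - \<sigma> i) *\<^sub>R outer (u i) (u i))"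
    and "trace (gram m Sn) = (\<Sum>i\<in>{1..m}. \<sigma> i - rho)"
    and "trace (gram m Sn) \<le> trace (gram m Sp) + x \<bullet> x"
proof -
  let ?d = "CARD('d)"
  let ?A = "gram m Sp + outer x x"
  have sig_nonneg: "0 \<le> \<sigma> i" if "i \<in> {1..?d}" for i
  proof -
    have "u i \<bullet> (?A *v u i) = \<sigma> i" using ev on that by simp
    moreover have "u i \<bullet> (?A *v u i) = u i \<bullet> (gram m Sp *v u i) + (x \<bullet> u i)^2"
      using quad_add_outer[of "u i" "gram m Sp" 1 x] by simp
    ultimately show ?thesis using gram_quad_nonneg[of "u i" m Sp] by (metis add_nonneg_nonneg zero_le_power2)
  qed
  show r0: "0 \<le> rho" using sig_nonneg[of m] m rho by simp
  show ge: "\<forall>i\<in>{1..m}. 0 \<le> \<sigma> i - rho" using srt m rho by auto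
  show "\<forall>i\<in>{m<..?d}. 0 \<le> rho - \<sigma> i" using srt m rho by auto
  show G: "gram m Sn = (\<Sum>i\<in>{1..m}. (\<sigma> i - rho) *\<^sub>R outer (u i) (u i))"
    unfolding gram_def
  proof (rule sum.cong)
    fix i assume "i \<in> {1..m}"
    then show "outer (Sn i) (Sn i) = (\<sigma> i - rho) *\<^sub>R outer (u i) (u i)"
      using rows ge by (simp add: outer_scaleR_both)
  qed simp
  have spec: "?A = (\<Sum>i\<in>{1..?d}. \<sigma> i *\<^sub>R outer (u i) (u i))"
    by (rule spectral_expansion[OF on ev])
  have one: "mat 1 = (\<Sum>i\<in>{1..?d}. outer (u i) (u i))"
    by (rule mat1_expansion[OF on])
  have split: "{1..?d} = {1..m} \<union> {m<..?d}" "{1..m} \<inter> {m<..?d} = {}" using m by auto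
  have sp: "(\<Sum>i\<in>{1..?d}. f i) = (\<Sum>i\<in>{1..m}. f i) + (\<Sum>i\<in>{m<..?d}. f i)" for f :: "nat \<Rightarrow> 'z::comm_monoid_add"
    unfolding split(1) by (rule sum.union_disjoint) (use split(2) in auto)
  show "?A - gram m Sn = rho *\<^sub>R mat 1 - (\<Sum>i\<in>{m<..?d}. (rho - \<sigma> i) *\<^sub>R outer (u i) (u i))"
    unfolding spec one G sp scaleR_right.sum scaleR_diff_left sum_subtractf
    by (simp add: algebra_simps scaleR_sum_right)
  have tr1: "trace (outer (u i) (u i)) = 1" if "i \<in> {1..?d}" for i
    using on that by (simp add: trace_outer)
  show T: "trace (gram m Sn) = (\<Sum>i\<in>{1..m}. \<sigma> i - rho)"
    unfolding G trace_sum trace_scaleR using tr1 m by simp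
  have "trace ?A = (\<Sum>i\<in>{1..?d}. \<sigma> i)"
    unfolding spec trace_sum trace_scaleR using tr1 by simp
  then have "trace (gram m Sp) + x \<bullet> x = (\<Sum>i\<in>{1..m}. \<sigma> i) + (\<Sum>i\<in>{m<..?d}. \<sigma> i)"
    using sp[of \<sigma>] by (simp add: trace_add trace_outer)
  moreover have "0 \<le> (\<Sum>i\<in>{m<..?d}. \<sigma> i)" using sig_nonneg by (intro sum_nonneg) auto
  moreover have "(\<Sum>i\<in>{1..m}. \<sigma> i - rho) \<le> (\<Sum>i\<in>{1..m}. \<sigma> i)"
    using r0 by (simp add: sum_subtractf)
  ultimately show "trace (gram m Sn) \<le> trace (gram m Sp) + x \<bullet> x" unfolding T by linarith
qed

lemma am_gm_ln:
  fixes a :: "nat \<Rightarrow> real"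
  assumes "finite K" "K \<noteq> {}" "\<forall>i\<in>K. 0 < a i"
  shows "(\<Sum>i\<in>K. ln (a i)) \<le> real (card K) * ln ((\<Sum>i\<in>K. a i) / real (card K))"
proof -
  define n where "n = real (card K)"
  have n0: "0 < n" using assms by (simp add: n_def card_gt_0_iff)
  define ab where "ab = (\<Sum>i\<in>K. a i) / n"
  have spos: "0 < (\<Sum>i\<in>K. a i)" using assms by (intro sum_pos) auto
  then have ab0: "0 < ab" using n0 by (simp add: ab_def)
  have "ln (a i) \<le> ln ab + (a i / ab - 1)" if "i \<in> K" for i
  proof -
    have "ln (a i / ab) \<le> a i / ab - 1" using assms that ab0 by (intro ln_le_minus_one) auto
    moreover have "ln (a i / ab) = ln (a i) - ln ab" using assms that ab0 by (subst ln_div) auto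
    ultimately show ?thesis by simp
  qed
  then have "(\<Sum>i\<in>K. ln (a i)) \<le> (\<Sum>i\<in>K. ln ab + (a i / ab - 1))"
    by (intro sum_mono) auto
  also have "\<dots> = n * ln ab + ((\<Sum>i\<in>K. a i) / ab - n)"
    by (simp add: sum.distrib sum_subtractf sum_divide_distrib[symmetric] n_def)
  also have "(\<Sum>i\<in>K. a i) / ab = n" using spos n0 by (simp add: ab_def)
  finally show ?thesis by (simp add: n_def ab_def)
qed

lemma scalar_bound:
  fixes g :: "nat \<Rightarrow> real" and d m :: nat
  assumes "0 < lam" "lam \<le> c" "1 \<le> m" "m \<le> d" "\<forall>i\<in>{1..m}. 0 \<le> g i" "(\<Sum>i\<in>{1..m}. g i) \<le> B"
  shows "real (d - m) * ln c + (\<Sum>i\<in>{1..m}. ln (c + g i)) - real d * ln lam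
     \<le> real d * ln (c / lam) + real m * ln (1 + B / (real m * lam))"
proof -
  have c0: "0 < c" using assms by simp
  have B0: "0 \<le> B" using assms(5,6) sum_nonneg[of "{1..m}" g] by fastforce
  have m0: "0 < real m" using assms by simp
  have "(\<Sum>i\<in>{1..m}. ln (c + g i)) \<le> real m * ln ((\<Sum>i\<in>{1..m}. c + g i) / real m)"
    using am_gm_ln[of "{1..m}" "\<lambda>i. c + g i"] assms c0 by (simp add: add_pos_nonneg)
  also have "(\<Sum>i\<in>{1..m}. c + g i) / real m = c * (1 + (\<Sum>i\<in>{1..m}. g i) / (real m * c))"
    using m0 c0 by (simp add: sum.distrib field_simps)
  also have "ln (c * (1 + (\<Sum>i\<in>{1..m}. g i) / (real m * c))) = ln c + ln (1 + (\<Sum>i\<in>{1..m}. g i) / (real m * c))"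
  proof (rule ln_mult_pos)
    show "0 < 1 + (\<Sum>i\<in>{1..m}. g i) / (real m * c)"
      using c0 assms(5) m0 by (intro add_pos_nonneg divide_nonneg_pos sum_nonneg) auto
  qed (rule c0)
  also have "ln (1 + (\<Sum>i\<in>{1..m}. g i) / (real m * c)) \<le> ln (1 + B / (real m * lam))"
  proof -
    have "(\<Sum>i\<in>{1..m}. g i) / (real m * c) \<le> B / (real m * c)"
      using assms(6) m0 c0 by (simp add: divide_right_mono)
    also have "\<dots> \<le> B / (real m * lam)"
      using B0 m0 assms(1,2) by (intro divide_left_mono) auto
    finally have "(\<Sum>i\<in>{1..m}. g i) / (real m * c) \<le> B / (real m * lam)" .
    moreover have "0 \<le> (\<Sum>i\<in>{1..m}. g i) / (real m * c)"
      using assms(5) m0 c0 by (intro divide_nonneg_pos sum_nonneg) auto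
    ultimately show ?thesis by simp
  qed
  then have "real m * (ln c + ln (1 + (\<Sum>i\<in>{1..m}. g i) / (real m * c))) \<le> real m * (ln c + ln (1 + B / (real m * lam)))"
    using m0 by simp
  finally have *: "(\<Sum>i\<in>{1..m}. ln (c + g i)) \<le> real m * ln c + real m * ln (1 + B / (real m * lam))"
    by (simp add: algebra_simps)
  have "ln (c / lam) = ln c - ln lam" using c0 assms(1) by (simp add: ln_div)
  then have e1: "real d * ln (c / lam) = real d * ln c - real d * ln lam" by (simp add: right_diff_distrib)
  have "real (d - m) = real d - real m" using assms by simp
  then have e2: "real (d - m) * ln c = real d * ln c - real m * ln c" by (simp add: algebra_simps)
  show ?thesis using * e1 e2 by linarith
qed

theorem mainTheorem3:
  fixes x :: "nat \<Rightarrow> real^'d" and S :: "nat \<Rightarrow> nat \<Rightarrow> real^'d" and \<rho> :: "nat \<Rightarrow> real"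
    and lam L :: real and m t :: nat
  assumes "lam > 0" and "L > 0" and "1 \<le> m" and "m \<le> CARD('d)"
    and "\<forall>s\<in>{1..t}. norm (x s) \<le> L"
    and "fd_sketch m x t S \<rho>"
  shows "ln (det ((\<Sum>s\<in>{1..t}. outer (x s) (x s)) + lam *\<^sub>R mat 1) / det (lam *\<^sub>R (mat 1 :: real^'d^'d)))
    \<le> real CARD('d) * ln (1 + (\<Sum>s\<in>{1..t}. \<rho> s) / lam)
       + real m * ln (1 + real t * L\<^sup>2 / (real m * lam))"
proof -
  let ?d = "CARD('d)"
  let ?I = "{1..CARD('d)}"
  have S0: "\<forall>i. S 0 i = 0" using assms(6) unfolding fd_sketch_def by blast
  have stp: "\<forall>s\<in>{1..t}. fd_step m (S (s - 1)) (x s) (S s) (\<rho> s)"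
    using assms(6) unfolding fd_sketch_def by blast
  define Q where "Q s (\<sigma>::nat \<Rightarrow> real) (u::nat \<Rightarrow> real^'d) \<longleftrightarrow>
        (\<forall>i\<in>?I. \<forall>j\<in>?I. u i \<bullet> u j = (if i = j then 1 else 0)) \<and>
        (\<forall>i\<in>?I. (gram m (S (s - 1)) + outer (x s) (x s)) *v u i = \<sigma> i *\<^sub>R u i) \<and>
        (\<forall>i\<in>?I. \<forall>j\<in>?I. i \<le> j \<longrightarrow> \<sigma> j \<le> \<sigma> i) \<and>
        \<rho> s = \<sigma> m \<and>
        (\<forall>i\<in>{1..m}. S s i = sqrt (\<sigma> i - \<rho> s) *\<^sub>R u i)" for s \<sigma> u
  have "\<forall>s\<in>{1..t}. \<exists>\<sigma> u. Q s \<sigma> u" using stp unfolding fd_step_def Q_def .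
  then obtain sg where "\<forall>s\<in>{1..t}. \<exists>u. Q s (sg s) u" using bchoice[of "{1..t}" "\<lambda>s \<sigma>. \<exists>u. Q s \<sigma> u"] by blast
  then obtain uu where "\<forall>s\<in>{1..t}. Q s (sg s) (uu s)" using bchoice[of "{1..t}" "\<lambda>s u. Q s (sg s) u"] by blast
  then have H: "\<forall>s\<in>{1..t}.
        (\<forall>i\<in>?I. \<forall>j\<in>?I. uu s i \<bullet> uu s j = (if i = j then 1 else 0)) \<and>
        (\<forall>i\<in>?I. (gram m (S (s - 1)) + outer (x s) (x s)) *v uu s i = sg s i *\<^sub>R uu s i) \<and>
        (\<forall>i\<in>?I. \<forall>j\<in>?I. i \<le> j \<longrightarrow> sg s j \<le> sg s i) \<and>
        \<rho> s = sg s m \<and>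
        (\<forall>i\<in>{1..m}. S s i = sqrt (sg s i - \<rho> s) *\<^sub>R uu s i)"
    unfolding Q_def .
  have on: "\<forall>i\<in>?I. \<forall>j\<in>?I. uu s i \<bullet> uu s j = (if i = j then 1 else 0)" if "s \<in> {1..t}" for s
    using H that by blast
  define E where "E s = (\<Sum>i\<in>{m<..?d}. (\<rho> s - sg s i) *\<^sub>R outer (uu s i) (uu s i))" for s
  have F1: "0 \<le> \<rho> s" if "s \<in> {1..t}" for s
    using step_facts(1)[where Sp="S (s - 1)" and Sn="S s" and x="x s" and \<sigma>="sg s" and u="uu s" and rho="\<rho> s", OF assms(3) assms(4)] H that by blast
  have F3: "\<forall>i\<in>{m<..?d}. 0 \<le> \<rho> s - sg s i" if "s \<in> {1..t}" for s
    using step_facts(3)[where Sp="S (s - 1)" and Sn="S s" and x="x s" and \<sigma>="sg s" and u="uu s" and rho="\<rho> s", OF assms(3) assms(4)] H that by blast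
  have F5: "gram m (S (s - 1)) + outer (x s) (x s) - gram m (S s) = \<rho> s *\<^sub>R mat 1 - E s" if "s \<in> {1..t}" for s
    unfolding E_def using step_facts(5)[where Sp="S (s - 1)" and Sn="S s" and x="x s" and \<sigma>="sg s" and u="uu s" and rho="\<rho> s", OF assms(3) assms(4)] H that by blast
  have F7: "trace (gram m (S s)) \<le> trace (gram m (S (s - 1))) + x s \<bullet> x s" if "s \<in> {1..t}" for s
    using step_facts(7)[where Sp="S (s - 1)" and Sn="S s" and x="x s" and \<sigma>="sg s" and u="uu s" and rho="\<rho> s", OF assms(3) assms(4)] H that by blast
  have G0: "gram m (S 0) = 0" by (simp add: gram_def S0)
  have tele: "t' \<le> t \<Longrightarrow> (\<Sum>s\<in>{1..t'}. outer (x s) (x s)) = gram m (S t') + (\<Sum>s\<in>{1..t'}. \<rho> s) *\<^sub>R mat 1 - (\<Sum>s\<in>{1..t'}. E s)" for t'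
  proof (induction t')
    case 0
    then show ?case by (simp add: G0)
  next
    case (Suc n)
    then have n: "n \<le> t" "Suc n \<in> {1..t}" by auto
    have X: "outer (x (Suc n)) (x (Suc n)) = gram m (S (Suc n)) - gram m (S n) + \<rho> (Suc n) *\<^sub>R mat 1 - E (Suc n)"
      using F5[OF n(2)] by (simp add: algebra_simps)
    show ?case unfolding sum.cl_ivl_Suc using Suc.IH[OF n(1)] X by (simp add: algebra_simps)
  qed
  have trb: "t' \<le> t \<Longrightarrow> trace (gram m (S t')) \<le> (\<Sum>s\<in>{1..t'}. x s \<bullet> x s)" for t'
  proof (induction t')
    case 0
    then show ?case by (simp add: G0 trace_0[unfolded mat_0])
  next
    case (Suc n)
    then have n: "n \<le> t" "Suc n \<in> {1..t}" by auto
    show ?case unfolding sum.cl_ivl_Suc using Suc.IH[OF n(1)] F7[OF n(2)] by simp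
  qed
  have xL: "(\<Sum>s\<in>{1..t}. x s \<bullet> x s) \<le> real t * L\<^sup>2"
  proof -
    have "(\<Sum>s\<in>{1..t}. x s \<bullet> x s) \<le> (\<Sum>s\<in>{1..t}. L\<^sup>2)"
    proof (rule sum_mono)
      fix s assume "s \<in> {1..t}"
      then have "norm (x s) \<le> L" using assms(5) by blast
      then have "(norm (x s))\<^sup>2 \<le> L\<^sup>2" by (simp add: power_mono)
      then show "x s \<bullet> x s \<le> L\<^sup>2" by (simp add: power2_norm_eq_inner)
    qed
    then show ?thesis by simp
  qed
  have dlam: "det (lam *\<^sub>R (mat 1 :: real^'d^'d)) = lam ^ ?d"
    by (subst det_diagonal) (auto simp: mat_def)
  show ?thesis
  proof (cases "t = 0")
    case True
    then show ?thesis using dlam assms(1) by simp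
  next
    case False
    then have t1: "t \<in> {1..t}" by simp
    define R where "R = (\<Sum>s\<in>{1..t}. \<rho> s)"
    define c where "c = lam + R"
    have R0: "0 \<le> R" unfolding R_def using F1 by (intro sum_nonneg) auto
    have c_ge: "lam \<le> c" using R0 by (simp add: c_def)
    have c0: "0 < c" using c_ge assms(1) by simp
    define V where "V = (\<Sum>s\<in>{1..t}. outer (x s) (x s)) + lam *\<^sub>R (mat 1 :: real^'d^'d)"
    have pdlam: "pd (lam *\<^sub>R (mat 1 :: real^'d^'d))"
      unfolding pd_def mulv_scaleR_mat using assms(1) by simp
    have "pd V \<and> det (lam *\<^sub>R (mat 1 :: real^'d^'d)) \<le> det V"
    proof -
      have "V = lam *\<^sub>R mat 1 + (\<Sum>s\<in>{1..t}. 1 *\<^sub>R outer (x s) (x s))"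
        by (simp add: V_def add.commute)
      then show ?thesis using det_sum_mono[OF _ pdlam, of "{1..t}" "\<lambda>_. 1" x] dlam assms(1) by simp
    qed
    then have pdV: "pd V" and dV: "lam ^ ?d \<le> det V" using dlam by auto
    have dV0: "0 < det V" using dV assms(1) by (smt (verit) zero_less_power)
    define K where "K = {1..t} \<times> {m<..?d}"
    define cc where "cc p = \<rho> (fst p) - sg (fst p) (snd p)" for p
    define aa where "aa p = uu (fst p) (snd p)" for p
    have KE: "(\<Sum>p\<in>K. cc p *\<^sub>R outer (aa p) (aa p)) = (\<Sum>s\<in>{1..t}. E s)"
      unfolding K_def E_def cc_def aa_def sum.cartesian_product by (simp add: split_def)
    have cc0: "\<forall>p\<in>K. 0 \<le> cc p" unfolding K_def cc_def using F3 by auto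
    have dVW: "det V \<le> det (V + (\<Sum>s\<in>{1..t}. E s))"
    proof -
      have "finite K" by (simp add: K_def)
      then show ?thesis using det_sum_mono[OF _ pdV dV0 cc0, of aa] unfolding KE by simp
    qed
    have W1: "V + (\<Sum>s\<in>{1..t}. E s) = gram m (S t) + c *\<^sub>R mat 1"
      unfolding V_def tele[OF order_refl] c_def R_def by (simp add: algebra_simps)
    define g where "g i = sg t i - \<rho> t" for i
    define w where "w i = c + (if i \<le> m then g i else 0)" for i
    have ont: "\<forall>i\<in>?I. \<forall>j\<in>?I. uu t i \<bullet> uu t j = (if i = j then 1 else 0)" using on[OF t1] .
    have Gt: "gram m (S t) = (\<Sum>i\<in>{1..m}. g i *\<^sub>R outer (uu t i) (uu t i))"
      unfolding g_def using step_facts(4)[where Sp="S (t - 1)" and Sn="S t" and x="x t" and \<sigma>="sg t" and u="uu t" and rho="\<rho> t", OF assms(3) assms(4)] H t1 by blast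
    have g0: "\<forall>i\<in>{1..m}. 0 \<le> g i"
      unfolding g_def using step_facts(2)[where Sp="S (t - 1)" and Sn="S t" and x="x t" and \<sigma>="sg t" and u="uu t" and rho="\<rho> t", OF assms(3) assms(4)] H t1 by blast
    have trG: "trace (gram m (S t)) = (\<Sum>i\<in>{1..m}. g i)"
      unfolding g_def using step_facts(6)[where Sp="S (t - 1)" and Sn="S t" and x="x t" and \<sigma>="sg t" and u="uu t" and rho="\<rho> t", OF assms(3) assms(4)] H t1 by blast
    have split: "?I = {1..m} \<union> {m<..?d}" "{1..m} \<inter> {m<..?d} = {}" using assms(3,4) by auto
    have sp: "(\<Sum>i\<in>?I. f i) = (\<Sum>i\<in>{1..m}. f i) + (\<Sum>i\<in>{m<..?d}. f i)" for f :: "nat \<Rightarrow> 'z::comm_monoid_add"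
      unfolding split(1) by (rule sum.union_disjoint) (use split(2) in auto)
    have pp: "(\<Prod>i\<in>?I. f i) = (\<Prod>i\<in>{1..m}. f i) * (\<Prod>i\<in>{m<..?d}. f i)" for f :: "nat \<Rightarrow> real"
      unfolding split(1) by (rule prod.union_disjoint) (use split(2) in auto)
    have W2: "gram m (S t) + c *\<^sub>R mat 1 = (\<Sum>i\<in>?I. w i *\<^sub>R outer (uu t i) (uu t i))"
    proof -
      have "(\<Sum>i\<in>?I. w i *\<^sub>R outer (uu t i) (uu t i)) = c *\<^sub>R (\<Sum>i\<in>?I. outer (uu t i) (uu t i)) + (\<Sum>i\<in>?I. (if i \<le> m then g i else 0) *\<^sub>R outer (uu t i) (uu t i))"
        unfolding w_def scaleR_add_left sum.distrib scaleR_sum_right ..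
      also have "(\<Sum>i\<in>?I. (if i \<le> m then g i else 0) *\<^sub>R outer (uu t i) (uu t i)) = (\<Sum>i\<in>{1..m}. g i *\<^sub>R outer (uu t i) (uu t i))"
      proof -
        have a: "(\<Sum>i\<in>{1..m}. (if i \<le> m then g i else 0) *\<^sub>R outer (uu t i) (uu t i)) = (\<Sum>i\<in>{1..m}. g i *\<^sub>R outer (uu t i) (uu t i))"
          by (rule sum.cong) auto
        have b: "(\<Sum>i\<in>{m<..?d}. (if i \<le> m then g i else 0) *\<^sub>R outer (uu t i) (uu t i)) = 0"
          by (rule sum.neutral) auto
        show ?thesis unfolding sp a b by simp
      qed
      finally show ?thesis unfolding Gt mat1_expansion[OF ont] by simp
    qed
    have dW: "det (V + (\<Sum>s\<in>{1..t}. E s)) = (\<Prod>i\<in>?I. w i)"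
      unfolding W1 W2 by (rule det_expansion[OF ont])
    have wpos: "0 < w i" if "i \<in> ?I" for i
      using c0 g0 that by (auto simp: w_def intro: add_pos_nonneg)
    have prodw: "(\<Prod>i\<in>?I. w i) = (\<Prod>i\<in>{1..m}. c + g i) * c ^ (?d - m)"
    proof -
      have a: "(\<Prod>i\<in>{1..m}. w i) = (\<Prod>i\<in>{1..m}. c + g i)"
        by (rule prod.cong) (auto simp: w_def)
      have b: "(\<Prod>i\<in>{m<..?d}. w i) = (\<Prod>i\<in>{m<..?d}. c)"
        by (rule prod.cong) (auto simp: w_def)
      show ?thesis unfolding pp a b by simp
    qed
    have lnW: "ln (\<Prod>i\<in>?I. w i) = (\<Sum>i\<in>{1..m}. ln (c + g i)) + real (?d - m) * ln c"
    proof -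
      have p1: "0 < (\<Prod>i\<in>{1..m}. c + g i)" using c0 g0 by (intro prod_pos) (auto intro: add_pos_nonneg)
      have "ln (\<Prod>i\<in>{1..m}. c + g i) = (\<Sum>i\<in>{1..m}. ln (c + g i))"
      proof (rule ln_prod)
        fix i assume "i \<in> {1..m}"
        then show "c + g i \<noteq> 0" using c0 g0 by (smt (verit))
      qed simp
      then show ?thesis unfolding prodw using p1 c0 by (simp add: ln_mult_pos ln_realpow)
    qed
    have LHS: "ln (det V / det (lam *\<^sub>R (mat 1 :: real^'d^'d))) \<le> ln (\<Prod>i\<in>?I. w i) - real ?d * ln lam"
    proof -
      have "ln (det V / lam ^ ?d) \<le> ln ((\<Prod>i\<in>?I. w i) / lam ^ ?d)"
        using dVW dW dV0 assms(1) by (simp add: divide_right_mono)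
      also have "\<dots> = ln (\<Prod>i\<in>?I. w i) - real ?d * ln lam"
      proof -
        have p: "0 < (\<Prod>i\<in>?I. w i)" using wpos by (intro prod_pos) auto
        have q: "0 < lam ^ ?d" using assms(1) by simp
        have pn: "(\<Prod>i\<in>?I. w i) \<noteq> 0" and qn: "lam ^ ?d \<noteq> 0" using p q by (metis less_irrefl)+
        have "ln ((\<Prod>i\<in>?I. w i) / lam ^ ?d) = ln (\<Prod>i\<in>?I. w i) - ln (lam ^ ?d)"
          using pn qn by (simp only: ln_div simp_thms if_True)
        then show ?thesis unfolding ln_realpow .
      qed
      finally show ?thesis unfolding dlam .
    qed
    have B: "(\<Sum>i\<in>{1..m}. g i) \<le> real t * L\<^sup>2" using trG trb[OF order_refl] xL by simp
    have "ln (\<Prod>i\<in>?I. w i) - real ?d * ln lam \<le> real ?d * ln (c / lam) + real m * ln (1 + real t * L\<^sup>2 / (real m * lam))"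
      using scalar_bound[OF assms(1) c_ge assms(3) assms(4) g0 B] unfolding lnW by (simp add: algebra_simps)
    moreover have "c / lam = 1 + R / lam" using assms(1) by (simp add: c_def field_simps)
    ultimately show ?thesis using LHS unfolding V_def R_def by simp
  qed
qed

end
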